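(* There exist a finite group $G$ of order $2^7$ (namely $\texttt{SmallGroup}(128,560)$) and a core-free elementary abelian subgroup $H$ of $G$ of order $8$ such that $d_G(H)=3$ but $b(G,H)=4$; in particular there are no $x,y\in G$ with $H\cap H^x\cap H^y=1$.
   Context: Depth: for a finite group $G$, a subgroup $H$ and $m\geqslant 1$, let $(\mathbb{C}G)^{\otimes m}=\mathbb{C}G\otimes_{\mathbb{C}H}\cdots\otimes_{\mathbb{C}H}\mathbb{C}G$ ($m$ factors). For $n\geqslant 1$, the inclusion $\mathbb{C}H\subseteq\mathbb{C}G$ has depth $2n$ if $(\mathbb{C}G)^{\otimes(n+1)}$ is isomorphic, as a $(\mathbb{C}G,\mathbb{C}H)$-bimodule, to a direct summand of $\bigoplus_{i=1}^k(\mathbb{C}G)^{\otimes n}$ for some $k\geqslant 1$; it has depth $2n+1$ if the same holds for $(\mathbb{C}H,\mathbb{C}H)$-bimodules; it has depth $1$ if $\mathbb{C}G$ is isomorphic as a $(\mathbb{C}H,\mathbb{C}H)$-bimodule to a direct summand of $\bigoplus_{i=1}^k\mathbb{C}H$ for some $k\geqslant1$. The depth $d_G(H)$ is the least positive integer $n$ such that the inclusion has depth $n$. For core-free $H$ (i.e. $\bigcap_{g\in G}H^g=1$), $b(G,H)$ is the least $b$ such that there exist $x_1,\dots,x_b\in G$ with $\bigcap_{i=1}^b H^{x_i}=1$. $\texttt{SmallGroup}(128,560)$ refers to the group with that identifier in the GAP/Magma small groups library. *)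

theory Defs
  imports Complex_Main "HOL-Algebra.Group"
begin

text \<open>A bimodule with C-basis A on which pairs (l,r) (l in L acting on the left,
 r in R acting on the right) act by permutations a l r.  Module maps between
 such permutation bimodules are matrices T with T (b l r y) (a l r x) = T y x.
 Y (basis A) is isomorphic to a direct summand of the direct sum of k copies
 of X (basis B) iff there are bimodule maps I : Y -> X^k, P : X^k -> Y with
 P o I = id (a split monomorphism).  The basis of X^k is {..<k} x B.\<close>

definition is_summand_multiple ::
  "'x set \<Rightarrow> ('l \<Rightarrow> 'r \<Rightarrow> 'x \<Rightarrow> 'x) \<Rightarrow> 'y set \<Rightarrow> ('l \<Rightarrow> 'r \<Rightarrow> 'y \<Rightarrow> 'y)
    \<Rightarrow> 'l set \<Rightarrow> 'r set \<Rightarrow> bool" where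
  "is_summand_multiple A a B b L R \<longleftrightarrow>
    (\<exists>k::nat. k \<ge> 1 \<and>
      (\<exists>(I :: nat \<times> 'y \<Rightarrow> 'x \<Rightarrow> complex) (P :: 'x \<Rightarrow> nat \<times> 'y \<Rightarrow> complex).
        (\<forall>l\<in>L. \<forall>r\<in>R. \<forall>x\<in>A. \<forall>i<k. \<forall>y\<in>B.
            I (i, b l r y) (a l r x) = I (i, y) x \<and> P (a l r x) (i, b l r y) = P x (i, y)) \<and>
        (\<forall>x\<in>A. \<forall>x'\<in>A.
            (\<Sum>c\<in>{..<k} \<times> B. P x c * I c x') = (if x = x' then 1 else 0))))"

text \<open>(CG)^{tensor m} (m factors, tensor over CH) is the permutation bimodule whose
 basis is the set of orbits of G^m under H^(m-1) acting by
 (g_1,...,g_m) -> (g_1 h_1, h_1^-1 g_2 h_2, ..., h_(m-1)^-1 g_m).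
 Lists of length m represent elements of G^m.\<close>

definition tensor_orbit :: "('a, 'b) monoid_scheme \<Rightarrow> 'a set \<Rightarrow> 'a list \<Rightarrow> 'a list set" where
  "tensor_orbit G H xs = {ys. length ys = length xs \<and>
     (\<exists>hf :: nat \<Rightarrow> 'a. (\<forall>j. j + 1 < length xs \<longrightarrow> hf j \<in> H) \<and>
        (\<forall>j<length xs.
           ys ! j = inv\<^bsub>G\<^esub> (if j = 0 then \<one>\<^bsub>G\<^esub> else hf (j - 1)) \<otimes>\<^bsub>G\<^esub> xs ! j
                    \<otimes>\<^bsub>G\<^esub> (if j + 1 = length xs then \<one>\<^bsub>G\<^esub> else hf j)))}"

definition tensor_basis :: "('a, 'b) monoid_scheme \<Rightarrow> 'a set \<Rightarrow> nat \<Rightarrow> 'a list set set" where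
  "tensor_basis G H m = tensor_orbit G H ` {xs. length xs = m \<and> set xs \<subseteq> carrier G}"

definition bimod_list_act :: "('a, 'b) monoid_scheme \<Rightarrow> 'a \<Rightarrow> 'a \<Rightarrow> 'a list \<Rightarrow> 'a list" where
  "bimod_list_act G l r xs =
     (let ys = xs[0 := l \<otimes>\<^bsub>G\<^esub> xs ! 0] in ys[length ys - 1 := ys ! (length ys - 1) \<otimes>\<^bsub>G\<^esub> r])"

definition tensor_act :: "('a, 'b) monoid_scheme \<Rightarrow> 'a \<Rightarrow> 'a \<Rightarrow> 'a list set \<Rightarrow> 'a list set" where
  "tensor_act G l r C = bimod_list_act G l r ` C"

definition has_depth :: "('a, 'b) monoid_scheme \<Rightarrow> 'a set \<Rightarrow> nat \<Rightarrow> bool" where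
  "has_depth G H d \<longleftrightarrow>
     (d = 1 \<and> is_summand_multiple (carrier G) (\<lambda>l r x. l \<otimes>\<^bsub>G\<^esub> x \<otimes>\<^bsub>G\<^esub> r)
                                   H (\<lambda>l r x. l \<otimes>\<^bsub>G\<^esub> x \<otimes>\<^bsub>G\<^esub> r) H H) \<or>
     (\<exists>n\<ge>1. d = 2 * n \<and>
        is_summand_multiple (tensor_basis G H (n + 1)) (tensor_act G)
                            (tensor_basis G H n) (tensor_act G) (carrier G) H) \<or>
     (\<exists>n\<ge>1. d = 2 * n + 1 \<and>
        is_summand_multiple (tensor_basis G H (n + 1)) (tensor_act G)
                            (tensor_basis G H n) (tensor_act G) H H)"

definition depth :: "('a, 'b) monoid_scheme \<Rightarrow> 'a set \<Rightarrow> nat" where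
  "depth G H = (LEAST d. d \<ge> 1 \<and> has_depth G H d)"

definition conj_subgroup :: "('a, 'b) monoid_scheme \<Rightarrow> 'a set \<Rightarrow> 'a \<Rightarrow> 'a set" where
  "conj_subgroup G H x = (\<lambda>h. inv\<^bsub>G\<^esub> x \<otimes>\<^bsub>G\<^esub> h \<otimes>\<^bsub>G\<^esub> x) ` H"

definition core_free :: "('a, 'b) monoid_scheme \<Rightarrow> 'a set \<Rightarrow> bool" where
  "core_free G H \<longleftrightarrow> (\<Inter>g\<in>carrier G. conj_subgroup G H g) = {\<one>\<^bsub>G\<^esub>}"

definition base_size :: "('a, 'b) monoid_scheme \<Rightarrow> 'a set \<Rightarrow> nat" where
  "base_size G H = (LEAST b. \<exists>xs. length xs = b \<and> set xs \<subseteq> carrier G \<and>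
                        (\<Inter>x\<in>set xs. conj_subgroup G H x) = {\<one>\<^bsub>G\<^esub>})"

definition elementary_abelian_2 :: "('a, 'b) monoid_scheme \<Rightarrow> 'a set \<Rightarrow> bool" where
  "elementary_abelian_2 G H \<longleftrightarrow>
     (\<forall>x\<in>H. \<forall>y\<in>H. x \<otimes>\<^bsub>G\<^esub> y = y \<otimes>\<^bsub>G\<^esub> x) \<and> (\<forall>x\<in>H. x \<otimes>\<^bsub>G\<^esub> x = \<one>\<^bsub>G\<^esub>)"

end

theory Submission
  imports Defs
begin

lemma lt_pow_bits: "(x::nat) < 2^m \<longleftrightarrow> (\<forall>n\<ge>m. \<not> bit x n)"
proof
  assume "x < 2^m" then have "take_bit m x = x" by (simp add: take_bit_nat_eq_self_iff)
  then show "\<forall>n\<ge>m. \<not> bit x n" by (metis bit_take_bit_iff not_le)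
next
  assume "\<forall>n\<ge>m. \<not> bit x n"
  then have "take_bit m x = x" by (auto simp: bit_eq_iff bit_take_bit_iff not_le)
  then show "x < 2^m" by (metis take_bit_nat_eq_self_iff)
qed

lemma bit8: "bit (8::nat) n \<longleftrightarrow> n = 3"
proof -
  have "bit ((2::nat)^3) n \<longleftrightarrow> n = 3" using bit_exp_iff[where 'a=nat, of 3 n] by simp
  then show ?thesis by simp
qed

lemma lt8_bit: "(x::nat) < 8 \<Longrightarrow> 3 \<le> n \<Longrightarrow> \<not> bit x n"
  using lt_pow_bits[of x 3] by simp

lemma lt128_bit: "(x::nat) < 128 \<Longrightarrow> 7 \<le> n \<Longrightarrow> \<not> bit x n"
  using lt_pow_bits[of x 7] by simp

lemma bit16: "bit (16 * (g::nat)) n \<longleftrightarrow> 4 \<le> n \<and> bit g (n - 4)"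
proof -
  have "16 * g = push_bit 4 g" by (simp add: push_bit_eq_mult)
  then show ?thesis by (simp add: bit_push_bit_iff)
qed

definition bf :: "nat \<Rightarrow> nat \<Rightarrow> bool" where
  "bf x y = ((bit x 0 \<and> bit y 4) \<noteq> ((bit x 1 \<and> bit y 5) \<noteq> (bit x 2 \<and> bit y 6)))"

definition gm :: "nat \<Rightarrow> nat \<Rightarrow> nat" where
  "gm x y = xor (xor x y) (if bf x y then 8 else 0)"

definition gi :: "nat \<Rightarrow> nat" where
  "gi x = xor x (if bf x x then 8 else 0)"

lemma bit_ite8: "bit (if b then 8 else 0 :: nat) n \<longleftrightarrow> b \<and> n = 3"
  by (simp add: bit8)

lemma bit_gm: "bit (gm x y) n \<longleftrightarrow> ((bit x n \<noteq> bit y n) \<noteq> (n = 3 \<and> bf x y))"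
  unfolding gm_def by (simp add: bit_xor_iff bit_ite8) blast

lemma bit_gi: "bit (gi x) n \<longleftrightarrow> (bit x n \<noteq> (n = 3 \<and> bf x x))"
  unfolding gi_def by (simp add: bit_xor_iff bit_ite8) blast

lemma bf_gm_left: "bf (gm x y) z = (bf x z \<noteq> bf y z)"
  unfolding bf_def by (simp add: bit_gm) blast

lemma bf_gm_right: "bf x (gm y z) = (bf x y \<noteq> bf x z)"
  unfolding bf_def by (simp add: bit_gm) blast

lemma bf_gi_left: "bf (gi x) z = bf x z"
  unfolding bf_def by (simp add: bit_gi)

lemma bf_gi_right: "bf z (gi x) = bf z x"
  unfolding bf_def by (simp add: bit_gi)

lemma bf_xor_left: "bf (xor x y) z = (bf x z \<noteq> bf y z)"
  unfolding bf_def by (simp add: bit_xor_iff) blast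

lemma bf_small: "y < 16 \<Longrightarrow> bf x y = False"
  unfolding bf_def using lt_pow_bits[of y 4] by simp

lemma gm_small: "y < 16 \<Longrightarrow> gm x y = xor x y"
  unfolding gm_def by (simp add: bf_small)

lemma gm_assoc: "gm (gm x y) z = gm x (gm y z)"
  by (intro bit_eqI) (simp add: bit_gm bf_gm_left bf_gm_right, blast)

lemma gm_lt: "x < 128 \<Longrightarrow> y < 128 \<Longrightarrow> gm x y < 128"
  using lt_pow_bits[of _ 7] by (simp add: bit_gm)

lemma gi_lt: "x < 128 \<Longrightarrow> gi x < 128"
  using lt_pow_bits[of _ 7] by (simp add: bit_gi)

lemma xor_lt8: "x < 8 \<Longrightarrow> y < (8::nat) \<Longrightarrow> xor x y < 8"
  using lt_pow_bits[of _ 3] by (simp add: bit_xor_iff)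

lemma gm_0l: "gm 0 x = x" by (simp add: gm_def bf_def)
lemma gm_0r: "gm x 0 = x" by (simp add: gm_def bf_def)
lemma gm_gi: "gm (gi x) x = 0"
  by (intro bit_eqI) (simp add: bit_gm bit_gi bf_gi_left, blast)

definition GG :: "nat monoid" where "GG = \<lparr>carrier = {..<128}, mult = gm, one = 0\<rparr>"
definition HH :: "nat set" where "HH = {..<8}"

lemma GG_simps [simp]: "carrier GG = {..<128}" "mult GG = gm" "one GG = 0"
  by (simp_all add: GG_def)

lemma group_GG: "group GG"
proof (rule groupI)
  show "\<And>x y. x \<in> carrier GG \<Longrightarrow> y \<in> carrier GG \<Longrightarrow> x \<otimes>\<^bsub>GG\<^esub> y \<in> carrier GG"
    by (simp add: gm_lt)
  show "\<one>\<^bsub>GG\<^esub> \<in> carrier GG" by simp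
  show "\<And>x y z. x \<in> carrier GG \<Longrightarrow> y \<in> carrier GG \<Longrightarrow> z \<in> carrier GG \<Longrightarrow>
           x \<otimes>\<^bsub>GG\<^esub> y \<otimes>\<^bsub>GG\<^esub> z = x \<otimes>\<^bsub>GG\<^esub> (y \<otimes>\<^bsub>GG\<^esub> z)"
    by (simp add: gm_assoc)
  show "\<And>x. x \<in> carrier GG \<Longrightarrow> \<one>\<^bsub>GG\<^esub> \<otimes>\<^bsub>GG\<^esub> x = x" by (simp add: gm_0l)
  show "\<And>x. x \<in> carrier GG \<Longrightarrow> \<exists>y\<in>carrier GG. y \<otimes>\<^bsub>GG\<^esub> x = \<one>\<^bsub>GG\<^esub>"
    using gi_lt gm_gi by auto
qed

interpretation GGg: group GG by (rule group_GG)

lemma inv_GG: "x \<in> carrier GG \<Longrightarrow> inv\<^bsub>GG\<^esub> x = gi x"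
  using GGg.inv_equality[of "gi x" x] gm_gi gi_lt by simp

lemma gi_small: "x < 8 \<Longrightarrow> gi x = x"
  unfolding gi_def using bf_small[of x x] by simp

definition cj :: "nat \<Rightarrow> nat \<Rightarrow> nat" where "cj h g = xor h (if bf h g then 8 else 0)"

lemma conj_formula: "g < 128 \<Longrightarrow> h < 8 \<Longrightarrow> gm (gm (gi g) h) g = cj h g"
  unfolding cj_def using bf_small[of h]
  by (intro bit_eqI) (simp add: bit_gm bit_gi bf_gm_left bf_gi_left bit_xor_iff bit_ite8, blast)

lemma conj_formula2: "g < 128 \<Longrightarrow> h < 8 \<Longrightarrow> gm (gm g h) (gi g) = cj h g"
  unfolding cj_def using bf_small[of h]
  by (intro bit_eqI) (simp add: bit_gm bit_gi bf_gm_left bf_gi_right bit_xor_iff bit_ite8, blast)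

definition orb2 :: "('a, 'b) monoid_scheme \<Rightarrow> 'a set \<Rightarrow> 'a \<Rightarrow> 'a \<Rightarrow> 'a list set" where
  "orb2 G H a b = (\<lambda>h. [a \<otimes>\<^bsub>G\<^esub> h, inv\<^bsub>G\<^esub> h \<otimes>\<^bsub>G\<^esub> b]) ` H"

lemma all_less2: "(\<forall>j<(2::nat). P j) = (P 0 \<and> P 1)"
  using less_2_cases by fastforce

lemma all_less2': "(\<forall>j::nat. j + 1 < 2 \<longrightarrow> P j) = P 0"
  by auto

lemma list_len1: "length ys = Suc 0 \<longleftrightarrow> (\<exists>a. ys = [a])"
  by (metis length_0_conv length_Suc_conv)

lemma list_len2: "length ys = 2 \<longleftrightarrow> (\<exists>a b. ys = [a, b])"
  by (metis (no_types, lifting) One_nat_def length_0_conv length_Suc_conv numeral_2_eq_2)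

context group begin

lemma orbit1: "g \<in> carrier G \<Longrightarrow> tensor_orbit G H [g] = {[g]}"
  unfolding tensor_orbit_def by (auto simp: list_len1)

lemma orbit2:
  assumes "H \<subseteq> carrier G" "a \<in> carrier G" "b \<in> carrier G"
  shows "tensor_orbit G H [a, b] = orb2 G H a b"
proof (rule Set.set_eqI)
  fix ys
  show "ys \<in> tensor_orbit G H [a, b] \<longleftrightarrow> ys \<in> orb2 G H a b"
  proof
    assume "ys \<in> tensor_orbit G H [a, b]"
    then obtain hf where l: "length ys = 2" and h0: "hf 0 \<in> H"
      and y0: "ys ! 0 = inv \<one> \<otimes> a \<otimes> hf 0" and y1: "ys ! 1 = inv (hf 0) \<otimes> b \<otimes> \<one>"
      unfolding tensor_orbit_def by (auto simp: all_less2)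
    have "hf 0 \<in> carrier G" using h0 assms by auto
    then have "ys = [a \<otimes> hf 0, inv (hf 0) \<otimes> b]" using l y0 y1 assms
      by (auto simp: list_len2)
    then show "ys \<in> orb2 G H a b" unfolding orb2_def using h0 by auto
  next
    assume "ys \<in> orb2 G H a b"
    then obtain h where h: "h \<in> H" and ys: "ys = [a \<otimes> h, inv h \<otimes> b]"
      unfolding orb2_def by auto
    have hc: "h \<in> carrier G" using h assms by auto
    show "ys \<in> tensor_orbit G H [a, b]"
      unfolding tensor_orbit_def
      apply (simp add: ys)
      apply (rule exI[of _ "\<lambda>_. h"])
      using h hc assms by (auto simp: less_Suc_eq)
  qed
qed

lemma tb1: "tensor_basis G H (Suc 0) = (\<lambda>g. {[g]}) ` carrier G"
proof -
  have "{xs. length xs = Suc 0 \<and> set xs \<subseteq> carrier G} = (\<lambda>g. [g]) ` carrier G"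
    by (auto simp: list_len1)
  then show ?thesis unfolding tensor_basis_def by (auto simp: orbit1 image_iff)
qed

lemma tb2: assumes "H \<subseteq> carrier G"
  shows "tensor_basis G H 2 = (\<lambda>(a, b). orb2 G H a b) ` (carrier G \<times> carrier G)"
proof -
  have "{xs. length xs = 2 \<and> set xs \<subseteq> carrier G} = (\<lambda>(a,b). [a, b]) ` (carrier G \<times> carrier G)"
    by (auto simp: list_len2 image_iff)
  then show ?thesis unfolding tensor_basis_def using assms
    by (auto simp: orbit2 image_iff) blast+
qed

lemma bimod1: "bimod_list_act G l r [g] = [l \<otimes> g \<otimes> r]"
  by (simp add: bimod_list_act_def Let_def)

lemma bimod2: "bimod_list_act G l r [a, b] = [l \<otimes> a, b \<otimes> r]"
  by (simp add: bimod_list_act_def Let_def)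

lemma act1: "tensor_act G l r {[g]} = {[l \<otimes> g \<otimes> r]}"
  by (simp add: tensor_act_def bimod1)

lemma act2:
  assumes "H \<subseteq> carrier G" "l \<in> carrier G" "r \<in> carrier G" "a \<in> carrier G" "b \<in> carrier G"
  shows "tensor_act G l r (orb2 G H a b) = orb2 G H (l \<otimes> a) (b \<otimes> r)"
proof -
  have "\<And>h. h \<in> H \<Longrightarrow> bimod_list_act G l r [a \<otimes> h, inv h \<otimes> b] = [l \<otimes> a \<otimes> h, inv h \<otimes> (b \<otimes> r)]"
    using assms by (auto simp: bimod2 m_assoc)
  then show ?thesis unfolding tensor_act_def orb2_def image_image
    by (auto simp: image_iff)
qed

lemma orb2_eq:
  assumes "subgroup H G" "a \<in> carrier G" "b \<in> carrier G" "c \<in> carrier G" "d \<in> carrier G"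
    "orb2 G H a b = orb2 G H c d"
  shows "\<exists>h\<in>H. c = a \<otimes> h \<and> d = inv h \<otimes> b"
proof -
  have "[c \<otimes> \<one>, inv \<one> \<otimes> d] \<in> orb2 G H c d" unfolding orb2_def
    using subgroup.one_closed[OF assms(1)] by auto
  then have "[c, d] \<in> orb2 G H a b" using assms by simp
  then show ?thesis unfolding orb2_def by auto
qed

lemma tb1_act_in: "l \<in> carrier G \<Longrightarrow> r \<in> carrier G \<Longrightarrow> C \<in> tensor_basis G H (Suc 0) \<Longrightarrow>
   tensor_act G l r C \<in> tensor_basis G H (Suc 0)"
  by (auto simp: tb1 act1)

lemma tb1_act_comp: "l \<in> carrier G \<Longrightarrow> r \<in> carrier G \<Longrightarrow> l' \<in> carrier G \<Longrightarrow> r' \<in> carrier G \<Longrightarrow>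
   C \<in> tensor_basis G H (Suc 0) \<Longrightarrow>
   tensor_act G (l \<otimes> l') (r' \<otimes> r) C = tensor_act G l r (tensor_act G l' r' C)"
  by (auto simp: tb1 act1 m_assoc)

lemma tb1_act_one: "C \<in> tensor_basis G H (Suc 0) \<Longrightarrow> tensor_act G \<one> \<one> C = C"
  by (auto simp: tb1 act1)

lemma tb2_act_in: "subgroup H G \<Longrightarrow> l \<in> carrier G \<Longrightarrow> r \<in> carrier G \<Longrightarrow> C \<in> tensor_basis G H 2 \<Longrightarrow>
   tensor_act G l r C \<in> tensor_basis G H 2"
  using subgroup.subset by (fastforce simp: tb2 act2)

lemma tb2_act_comp: "subgroup H G \<Longrightarrow> l \<in> carrier G \<Longrightarrow> r \<in> carrier G \<Longrightarrow> l' \<in> carrier G \<Longrightarrow> r' \<in> carrier G \<Longrightarrow>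
   C \<in> tensor_basis G H 2 \<Longrightarrow>
   tensor_act G (l \<otimes> l') (r' \<otimes> r) C = tensor_act G l r (tensor_act G l' r' C)"
  using subgroup.subset by (fastforce simp: tb2 act2 m_assoc)

lemma tb2_act_one: "subgroup H G \<Longrightarrow> C \<in> tensor_basis G H 2 \<Longrightarrow> tensor_act G \<one> \<one> C = C"
  using subgroup.subset by (fastforce simp: tb2 act2)

lemma tb_finite: "finite (carrier G) \<Longrightarrow> finite (tensor_basis G H m)"
  unfolding tensor_basis_def
  by (intro finite_imageI) (metis (no_types, lifting) Collect_cong finite_lists_length_eq)

lemma tb1_bij: "l \<in> carrier G \<Longrightarrow> r \<in> carrier G \<Longrightarrow>
   bij_betw (tensor_act G l r) (tensor_basis G H (Suc 0)) (tensor_basis G H (Suc 0))"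
  apply (rule bij_betw_byWitness[where f'="tensor_act G (inv l) (inv r)"])
  apply (metis inv_closed l_inv r_inv tb1_act_comp tb1_act_one)
  apply (metis inv_closed r_inv l_inv tb1_act_comp tb1_act_one)
  using tb1_act_in by auto

lemma tb2_bij: "subgroup H G \<Longrightarrow> l \<in> carrier G \<Longrightarrow> r \<in> carrier G \<Longrightarrow>
   bij_betw (tensor_act G l r) (tensor_basis G H 2) (tensor_basis G H 2)"
  apply (rule bij_betw_byWitness[where f'="tensor_act G (inv l) (inv r)"])
  apply (metis inv_closed l_inv r_inv tb2_act_comp tb2_act_one)
  apply (metis inv_closed r_inv l_inv tb2_act_comp tb2_act_one)
  using tb2_act_in by auto

end

lemma sum_unique_pre:
  assumes "bij_betw g B B" "y \<in> B" "finite B"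
  shows "(\<Sum>z\<in>B. if g z = y then F z else 0) = F (inv_into B g y)"
proof -
  have img: "g ` B = B" using assms(1) by (simp add: bij_betw_def)
  have z: "inv_into B g y \<in> B" "g (inv_into B g y) = y"
    using img assms(2) by (metis inv_into_into, metis f_inv_into_f)
  have u: "z = inv_into B g y" if "z \<in> B" "g z = y" for z
    using bij_betw_inv_into_left[OF assms(1) that(1)] that(2) by simp
  have "(\<Sum>z\<in>B. if g z = y then F z else 0) = (\<Sum>z\<in>B. if z = inv_into B g y then F z else 0)"
    by (rule sum.cong[OF refl]) (metis u z(2))
  also have "\<dots> = F (inv_into B g y)" using z assms(3) by (simp add: sum.delta)
  finally show ?thesis .
qed

lemma obs:
  fixes f :: "'l \<times> 'r \<Rightarrow> complex" and A :: "'x set" and B :: "'y set"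
  assumes S: "is_summand_multiple A a B b L R"
  and finE: "finite E" and EL: "E \<subseteq> L \<times> R" and finB: "finite B"
  and x0: "x0 \<in> A" and ax0: "\<forall>e\<in>E. a (fst e) (snd e) x0 \<in> A"
  and bbij: "\<forall>e\<in>E. bij_betw (b (fst e) (snd e)) B B"
  and sig: "\<forall>y'\<in>B. \<exists>\<sigma>. \<forall>e\<in>E. \<sigma> e \<in> E \<and> \<sigma> (\<sigma> e) = e \<and> f (\<sigma> e) = - f e \<and>
              b (fst (\<sigma> e)) (snd (\<sigma> e)) y' = b (fst e) (snd e) y'"
  and nz: "(\<Sum>e\<in>E. if a (fst e) (snd e) x0 = x0 then f e else 0) \<noteq> 0"
  shows False
proof -
  obtain k :: nat and I :: "nat \<times> 'y \<Rightarrow> 'x \<Rightarrow> complex" and P :: "'x \<Rightarrow> nat \<times> 'y \<Rightarrow> complex" where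
    eqv: "\<forall>l\<in>L. \<forall>r\<in>R. \<forall>x\<in>A. \<forall>i<k. \<forall>y\<in>B.
            I (i, b l r y) (a l r x) = I (i, y) x \<and> P (a l r x) (i, b l r y) = P x (i, y)"
    and idy: "\<forall>x\<in>A. \<forall>x'\<in>A. (\<Sum>c\<in>{..<k} \<times> B. P x c * I c x') = (if x = x' then 1 else 0)"
    using S unfolding is_summand_multiple_def apply (elim exE conjE) apply (rule that) by assumption+
  define aa where "aa e = a (fst e) (snd e)" for e
  define bb where "bb e = b (fst e) (snd e)" for e
  have O1: "(\<Sum>e\<in>E. if bb e y' = y then f e else 0) = 0" if "y' \<in> B" for y' y
  proof -
    from bspec[OF sig that] obtain \<sigma> where s: "\<forall>e\<in>E. \<sigma> e \<in> E \<and> \<sigma> (\<sigma> e) = e \<and> f (\<sigma> e) = - f e \<and> bb (\<sigma> e) y' = bb e y'"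
      unfolding bb_def by (elim exE) blast
    have bij: "bij_betw \<sigma> E E" by (rule bij_betw_byWitness[where f'=\<sigma>]) (use s in auto)
    let ?g = "\<lambda>e. if bb e y' = y then f e else 0"
    have "(\<Sum>e\<in>E. ?g e) = (\<Sum>e\<in>E. ?g (\<sigma> e))" using sum.reindex_bij_betw[OF bij, of ?g] by simp
    also have "\<dots> = (\<Sum>e\<in>E. - ?g e)" using s by (intro sum.cong) auto
    also have "\<dots> = - (\<Sum>e\<in>E. ?g e)" by (simp add: sum_negf)
    finally show ?thesis by simp
  qed
  have pre: "I (i, y) (aa e x0) = (\<Sum>z\<in>B. if bb e z = y then I (i, z) x0 else 0)"
    if "e \<in> E" "i < k" "y \<in> B" for e i y
  proof -
    have bj: "bij_betw (bb e) B B" using bspec[OF bbij that(1)] unfolding bb_def .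
    let ?z = "inv_into B (bb e) y"
    have img: "bb e ` B = B" using bj by (simp add: bij_betw_def)
    have z: "?z \<in> B" "bb e ?z = y"
      using img that(3) by (metis inv_into_into, metis f_inv_into_f)
    have eLR: "e \<in> L \<times> R" using EL that(1) by auto
    obtain l r where e: "e = (l, r)" "l \<in> L" "r \<in> R" using eLR by (cases e) auto
    have "I (i, bb e ?z) (aa e x0) = I (i, ?z) x0"
      using eqv[rule_format, OF e(2) e(3) x0 that(2) z(1)] by (simp add: aa_def bb_def e)
    then show ?thesis using sum_unique_pre[OF bj that(3) finB, of "\<lambda>z. I (i, z) x0"] z by simp
  qed
  have O2: "(\<Sum>e\<in>E. f e * I (i, y) (aa e x0)) = 0" if "i < k" "y \<in> B" for i y
  proof -
    have "(\<Sum>e\<in>E. f e * I (i, y) (aa e x0)) = (\<Sum>e\<in>E. \<Sum>z\<in>B. if bb e z = y then f e * I (i, z) x0 else 0)"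
      using pre that by (intro sum.cong refl) (auto simp: sum_distrib_left intro!: sum.cong)
    also have "\<dots> = (\<Sum>z\<in>B. \<Sum>e\<in>E. if bb e z = y then f e * I (i, z) x0 else 0)"
      by (rule sum.swap)
    also have "\<dots> = (\<Sum>z\<in>B. I (i, z) x0 * (\<Sum>e\<in>E. if bb e z = y then f e else 0))"
      by (intro sum.cong refl) (auto simp: sum_distrib_left mult.commute intro!: sum.cong)
    also have "\<dots> = 0" using O1 by simp
    finally show ?thesis .
  qed
  have "(\<Sum>e\<in>E. f e * (\<Sum>c\<in>{..<k} \<times> B. P x0 c * I c (aa e x0))) = (\<Sum>e\<in>E. if aa e x0 = x0 then f e else 0)"
    using idy x0 ax0 unfolding aa_def by (intro sum.cong) auto
  moreover have "(\<Sum>e\<in>E. f e * (\<Sum>c\<in>{..<k} \<times> B. P x0 c * I c (aa e x0))) = 0"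
  proof -
    have "(\<Sum>e\<in>E. f e * (\<Sum>c\<in>{..<k} \<times> B. P x0 c * I c (aa e x0)))
        = (\<Sum>c\<in>{..<k} \<times> B. P x0 c * (\<Sum>e\<in>E. f e * I c (aa e x0)))"
      unfolding sum_distrib_left
      by (subst sum.swap) (simp add: mult.left_commute)
    also have "\<dots> = 0" using O2 by (intro sum.neutral) auto
    finally show ?thesis .
  qed
  ultimately show False using nz unfolding aa_def by simp
qed

lemma sum_ind_bij:
  assumes "finite A" "\<forall>x\<in>A. g x \<in> A" "inj_on g A" "x \<in> A"
  shows "(\<Sum>x0\<in>A. if g x0 = x then (1::real) else 0) = 1"
proof -
  have img: "g ` A = A" using assms by (intro endo_inj_surj) auto
  then obtain z where z: "z \<in> A" "g z = x" using assms(4) by (metis imageE)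
  have "(\<Sum>x0\<in>A. if g x0 = x then (1::real) else 0) = (\<Sum>x0\<in>A. if x0 = z then 1 else 0)"
  proof (rule sum.cong[OF refl])
    fix x0 assume "x0 \<in> A"
    then have "g x0 = x \<longleftrightarrow> x0 = z" using z assms(3) unfolding inj_on_def by metis
    then show "(if g x0 = x then (1::real) else 0) = (if x0 = z then 1 else 0)" by simp
  qed
  also have "\<dots> = 1" using z assms(1) by simp
  finally show ?thesis .
qed

lemma pos:
  fixes ch :: "'c \<Rightarrow> 'l \<times> 'r \<Rightarrow> real" and em :: "'l \<times> 'r \<Rightarrow> 'l \<times> 'r \<Rightarrow> 'l \<times> 'r"
    and A :: "'x set" and B :: "'y set" and X :: "'c set"
  assumes finA: "finite A" and neA: "A \<noteq> {}" and finB: "finite B" and finE: "finite (L \<times> R)"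
  and aA: "\<forall>e\<in>L \<times> R. \<forall>x\<in>A. a (fst e) (snd e) x \<in> A"
  and ainj: "\<forall>e\<in>L \<times> R. inj_on (a (fst e) (snd e)) A"
  and bB: "\<forall>e\<in>L \<times> R. \<forall>y\<in>B. b (fst e) (snd e) y \<in> B"
  and binj: "\<forall>e\<in>L \<times> R. inj_on (b (fst e) (snd e)) B"
  and acomp: "\<forall>e\<in>L \<times> R. \<forall>e'\<in>L \<times> R. \<forall>x\<in>A.
      a (fst (em e e')) (snd (em e e')) x = a (fst e) (snd e) (a (fst e') (snd e') x)"
  and bcomp: "\<forall>e\<in>L \<times> R. \<forall>e'\<in>L \<times> R. \<forall>y\<in>B.
      b (fst (em e e')) (snd (em e e')) y = b (fst e) (snd e) (b (fst e') (snd e') y)"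
  and embij: "\<forall>e\<in>L \<times> R. bij_betw (em e) (L \<times> R) (L \<times> R)"
  and eone: "eone \<in> L \<times> R" "\<forall>y\<in>B. b (fst eone) (snd eone) y = y"
  and finX: "finite X" "X \<noteq> {}"
  and chv: "\<forall>c\<in>X. \<forall>e\<in>L \<times> R. ch c e * ch c e = 1"
  and chm: "\<forall>c\<in>X. \<forall>e\<in>L \<times> R. \<forall>e'\<in>L \<times> R. ch c (em e e') = ch c e * ch c e'"
  and orth: "\<forall>e\<in>L \<times> R. \<forall>e'\<in>L \<times> R. (\<Sum>c\<in>X. ch c e * ch c e') = (if e = e' then real (card X) else 0)"
  and cover: "\<forall>c\<in>X. \<exists>y0\<in>B. \<forall>e\<in>L \<times> R. b (fst e) (snd e) y0 = y0 \<longrightarrow> ch c e = 1"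
  shows "is_summand_multiple A a B b L R"
proof -
  define E where "E = L \<times> R"
  define aa where "aa e = a (fst e) (snd e)" for e
  define bb where "bb e = b (fst e) (snd e)" for e
  obtain y0f where y0f: "\<forall>c\<in>X. y0f c \<in> B \<and> (\<forall>e\<in>E. bb e (y0f c) = y0f c \<longrightarrow> ch c e = 1)"
    using cover unfolding E_def bb_def by metis
  define u where "u \<xi> x = (\<Sum>f\<in>E. if aa f (fst \<xi>) = x then ch (snd \<xi>) f else 0)" for \<xi> :: "'x \<times> 'c" and x
  define w where "w \<xi> y = (\<Sum>f\<in>E. if bb f (y0f (snd \<xi>)) = y then ch (snd \<xi>) f else 0)" for \<xi> :: "'x \<times> 'c" and y
  define nrm where "nrm \<xi> = (\<Sum>y\<in>B. (w \<xi> y)^2)" for \<xi>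
  define Xi where "Xi = A \<times> X"
  define K where "K = real (card X) * real (card E)"
  have finXi: "finite Xi" using finA finX unfolding Xi_def by auto
  obtain enum where enum: "bij_betw enum {0..<card Xi} Xi" using ex_bij_betw_nat_finite[OF finXi] by blast
  define k where "k = card Xi"
  have enumk: "bij_betw enum {..<k} Xi" using enum unfolding k_def by (simp add: atLeast0LessThan)
  have enumin: "enum i \<in> Xi" if "i < k" for i using enumk that by (auto simp: bij_betw_def)
  have Ene: "E \<noteq> {}" using eone unfolding E_def by auto
  have finE': "finite E" using finE unfolding E_def .
  have Kpos: "K > 0" using Ene finE' finX unfolding K_def by (simp add: card_gt_0_iff)
  have kpos: "k \<ge> 1"
  proof -
    have "Xi \<noteq> {}" using neA finX unfolding Xi_def by auto
    then show ?thesis using finXi unfolding k_def by (simp add: Suc_le_eq card_gt_0_iff)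
  qed
  have U: "u \<xi> (aa e x) = ch (snd \<xi>) e * u \<xi> x" if xiX: "\<xi> \<in> Xi" and eE: "e \<in> E" and xA: "x \<in> A" for \<xi> e x
  proof -
    obtain x0 c where xi: "\<xi> = (x0, c)" "x0 \<in> A" "c \<in> X" using xiX unfolding Xi_def by auto
    let ?g = "\<lambda>f. if aa f x0 = aa e x then ch c f else 0"
    have bj: "bij_betw (em e) E E" using embij eE unfolding E_def by auto
    have "u \<xi> (aa e x) = (\<Sum>f\<in>E. ?g f)" by (simp add: u_def xi(1) cong: if_cong)
    also have "\<dots> = (\<Sum>f\<in>E. ?g (em e f))" using sum.reindex_bij_betw[OF bj, of ?g] by simp
    also have "\<dots> = (\<Sum>f\<in>E. ch c e * (if aa f x0 = x then ch c f else 0))"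
    proof (rule sum.cong[OF refl])
      fix f assume f: "f \<in> E"
      have "aa (em e f) x0 = aa e (aa f x0)" using acomp eE f xi(2) unfolding aa_def E_def by blast
      moreover have "aa f x0 \<in> A" using aA f xi(2) unfolding aa_def E_def by blast
      moreover have "aa e (aa f x0) = aa e x \<longleftrightarrow> aa f x0 = x"
        using ainj eE xA calculation(2) unfolding aa_def E_def inj_on_def by blast
      moreover have "ch c (em e f) = ch c e * ch c f" using chm xi(3) eE f unfolding E_def by blast
      ultimately show "?g (em e f) = ch c e * (if aa f x0 = x then ch c f else 0)" by simp
    qed
    also have "\<dots> = ch c e * u \<xi> x" by (simp add: u_def xi(1) sum_distrib_left cong: if_cong)
    finally show ?thesis using xi by simp
  qed
  have W: "w \<xi> (bb e y) = ch (snd \<xi>) e * w \<xi> y" if xiX: "\<xi> \<in> Xi" and eE: "e \<in> E" and yB: "y \<in> B" for \<xi> e y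
  proof -
    obtain x0 c where xi: "\<xi> = (x0, c)" "x0 \<in> A" "c \<in> X" using xiX unfolding Xi_def by auto
    define y0 where "y0 = y0f c"
    have y0B: "y0 \<in> B" using y0f xi(3) unfolding y0_def by blast
    let ?g = "\<lambda>f. if bb f y0 = bb e y then ch c f else 0"
    have bj: "bij_betw (em e) E E" using embij eE unfolding E_def by auto
    have "w \<xi> (bb e y) = (\<Sum>f\<in>E. ?g f)" by (simp add: w_def xi(1) y0_def cong: if_cong)
    also have "\<dots> = (\<Sum>f\<in>E. ?g (em e f))" using sum.reindex_bij_betw[OF bj, of ?g] by simp
    also have "\<dots> = (\<Sum>f\<in>E. ch c e * (if bb f y0 = y then ch c f else 0))"
    proof (rule sum.cong[OF refl])
      fix f assume f: "f \<in> E"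
      have "bb (em e f) y0 = bb e (bb f y0)" using bcomp eE f y0B unfolding bb_def E_def by blast
      moreover have "bb f y0 \<in> B" using bB f y0B unfolding bb_def E_def by blast
      moreover have "bb e (bb f y0) = bb e y \<longleftrightarrow> bb f y0 = y"
        using binj eE yB calculation(2) unfolding bb_def E_def inj_on_def by blast
      moreover have "ch c (em e f) = ch c e * ch c f" using chm xi(3) eE f unfolding E_def by blast
      ultimately show "?g (em e f) = ch c e * (if bb f y0 = y then ch c f else 0)" by simp
    qed
    also have "\<dots> = ch c e * w \<xi> y" by (simp add: w_def xi(1) y0_def sum_distrib_left cong: if_cong)
    finally show ?thesis using xi by simp
  qed
  have N: "nrm \<xi> > 0" if xiX: "\<xi> \<in> Xi" for \<xi>
  proof -
    obtain x0 c where xi: "\<xi> = (x0, c)" "c \<in> X" using xiX unfolding Xi_def by auto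
    define y0 where "y0 = y0f c"
    have y0B: "y0 \<in> B" and triv: "\<forall>e\<in>E. bb e y0 = y0 \<longrightarrow> ch c e = 1"
      using y0f xi(2) unfolding y0_def by blast+
    have "w \<xi> y0 = (\<Sum>f\<in>E. if bb f y0 = y0 then ch c f else 0)"
      by (simp add: w_def xi(1) y0_def cong: if_cong)
    also have "\<dots> = (\<Sum>f\<in>E. if bb f y0 = y0 then 1 else 0)"
      using triv by (intro sum.cong refl) auto
    also have "\<dots> \<ge> (if bb eone y0 = y0 then 1 else 0)"
      using eone(1) finE' by (intro member_le_sum) (auto simp: E_def)
    finally have "w \<xi> y0 \<ge> 1" using eone(2) y0B unfolding bb_def by simp
    then have "(w \<xi> y0)^2 > 0" by simp
    also have "(w \<xi> y0)^2 \<le> nrm \<xi>" unfolding nrm_def using y0B finB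
      by (intro member_le_sum) auto
    finally show ?thesis .
  qed
  have ifmult: "(if P then a else 0) * (if Q then b else 0) = (if P \<and> Q then a * b else (0::real))" for P Q a b
    by simp
  have ifsum: "(\<Sum>c\<in>X. if P then g c else 0) = (if P then (\<Sum>c\<in>X. g c) else (0::real))" for P g
    by (cases P) simp_all
  have F4: "(\<Sum>\<xi>\<in>Xi. u \<xi> x * u \<xi> x') = (if x = x' then K else 0)" if xA: "x \<in> A" and x'A: "x' \<in> A" for x x'
  proof -
    have "(\<Sum>\<xi>\<in>Xi. u \<xi> x * u \<xi> x') = (\<Sum>x0\<in>A. \<Sum>c\<in>X. u (x0, c) x * u (x0, c) x')"
      unfolding Xi_def by (simp add: sum.cartesian_product)
    also have "\<dots> = (\<Sum>x0\<in>A. \<Sum>c\<in>X. \<Sum>f\<in>E. \<Sum>f'\<in>E.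
        (if aa f x0 = x \<and> aa f' x0 = x' then ch c f * ch c f' else 0))"
    proof (intro sum.cong refl)
      fix x0 c
      show "u (x0, c) x * u (x0, c) x' = (\<Sum>f\<in>E. \<Sum>f'\<in>E.
        (if aa f x0 = x \<and> aa f' x0 = x' then ch c f * ch c f' else 0))"
        unfolding u_def fst_conv snd_conv sum_product ifmult ..
    qed
    also have "\<dots> = (\<Sum>x0\<in>A. \<Sum>f\<in>E. \<Sum>f'\<in>E. \<Sum>c\<in>X.
        (if aa f x0 = x \<and> aa f' x0 = x' then ch c f * ch c f' else 0))"
    proof (intro sum.cong refl)
      fix x0
      have "(\<Sum>c\<in>X. \<Sum>f\<in>E. \<Sum>f'\<in>E. (if aa f x0 = x \<and> aa f' x0 = x' then ch c f * ch c f' else 0))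
         = (\<Sum>f\<in>E. \<Sum>c\<in>X. \<Sum>f'\<in>E. (if aa f x0 = x \<and> aa f' x0 = x' then ch c f * ch c f' else 0))"
        by (rule sum.swap)
      also have "\<dots> = (\<Sum>f\<in>E. \<Sum>f'\<in>E. \<Sum>c\<in>X. (if aa f x0 = x \<and> aa f' x0 = x' then ch c f * ch c f' else 0))"
        by (intro sum.cong refl) (rule sum.swap)
      finally show "(\<Sum>c\<in>X. \<Sum>f\<in>E. \<Sum>f'\<in>E. (if aa f x0 = x \<and> aa f' x0 = x' then ch c f * ch c f' else 0))
         = (\<Sum>f\<in>E. \<Sum>f'\<in>E. \<Sum>c\<in>X. (if aa f x0 = x \<and> aa f' x0 = x' then ch c f * ch c f' else 0))" .
    qed
    also have "\<dots> = (\<Sum>x0\<in>A. \<Sum>f\<in>E. \<Sum>f'\<in>E.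
        (if aa f x0 = x \<and> aa f' x0 = x' then (if f = f' then real (card X) else 0) else 0))"
    proof (intro sum.cong refl)
      fix x0 f f' assume f: "f \<in> E" and f': "f' \<in> E"
      show "(\<Sum>c\<in>X. (if aa f x0 = x \<and> aa f' x0 = x' then ch c f * ch c f' else 0)) =
        (if aa f x0 = x \<and> aa f' x0 = x' then (if f = f' then real (card X) else 0) else 0)"
      proof -
        have o: "(\<Sum>c\<in>X. ch c f * ch c f') = (if f = f' then real (card X) else 0)"
          using orth f f' unfolding E_def by blast
        show ?thesis unfolding ifsum o ..
      qed
    qed
    also have "\<dots> = (\<Sum>x0\<in>A. \<Sum>f\<in>E.
        (if aa f x0 = x \<and> aa f x0 = x' then real (card X) else 0))"
    proof (intro sum.cong refl)
      fix x0 f assume f: "f \<in> E"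
      have "(\<Sum>f'\<in>E. (if aa f x0 = x \<and> aa f' x0 = x' then (if f = f' then real (card X) else 0) else 0))
        = (\<Sum>f'\<in>E. if f' = f then (if aa f x0 = x \<and> aa f x0 = x' then real (card X) else 0) else 0)"
        by (intro sum.cong refl) auto
      also have "\<dots> = (if aa f x0 = x \<and> aa f x0 = x' then real (card X) else 0)"
        using f finE' by (simp add: sum.delta')
      finally show "(\<Sum>f'\<in>E. (if aa f x0 = x \<and> aa f' x0 = x' then (if f = f' then real (card X) else 0) else 0))
        = (if aa f x0 = x \<and> aa f x0 = x' then real (card X) else 0)" .
    qed
    also have "\<dots> = (\<Sum>f\<in>E. \<Sum>x0\<in>A.
        (if aa f x0 = x \<and> aa f x0 = x' then real (card X) else 0))"
      by (rule sum.swap)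
    also have "\<dots> = (if x = x' then K else 0)"
    proof (cases "x = x'")
      case True
      have "(\<Sum>f\<in>E. \<Sum>x0\<in>A. (if aa f x0 = x \<and> aa f x0 = x' then real (card X) else 0))
          = (\<Sum>f\<in>E. real (card X) * (\<Sum>x0\<in>A. if aa f x0 = x then 1 else 0))"
        unfolding sum_distrib_left using True by (intro sum.cong refl) simp
      also have "\<dots> = (\<Sum>f\<in>E. real (card X))"
      proof (rule sum.cong[OF refl])
        fix f assume f: "f \<in> E"
        have "(\<Sum>x0\<in>A. if aa f x0 = x then (1::real) else 0) = 1"
          using f aA ainj xA finA unfolding aa_def E_def by (intro sum_ind_bij) auto
        then show "real (card X) * (\<Sum>x0\<in>A. if aa f x0 = x then 1 else 0) = real (card X)" by simp
      qed
      also have "\<dots> = K" unfolding K_def by simp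
      finally show ?thesis using True by simp
    next
      case False
      then show ?thesis by (auto intro!: sum.neutral)
    qed
    finally show ?thesis .
  qed
  define I where "I c x = complex_of_real (u (enum (fst c)) x * w (enum (fst c)) (snd c))"
    for c :: "nat \<times> 'y" and x
  define P where "P x c = complex_of_real (u (enum (fst c)) x * w (enum (fst c)) (snd c)
      / (nrm (enum (fst c)) * K))" for c :: "nat \<times> 'y" and x
  show ?thesis unfolding is_summand_multiple_def
  proof (intro exI conjI)
    show "1 \<le> k" by (rule kpos)
    show "\<forall>l\<in>L. \<forall>r\<in>R. \<forall>x\<in>A. \<forall>i<k. \<forall>y\<in>B.
            I (i, b l r y) (a l r x) = I (i, y) x \<and> P (a l r x) (i, b l r y) = P x (i, y)"
    proof (intro ballI allI impI)
      fix l r x i y assume lr: "l \<in> L" "r \<in> R" and x: "x \<in> A" and i: "i < k" and y: "y \<in> B"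
      have eE: "(l, r) \<in> E" using lr unfolding E_def by auto
      have xi: "enum i \<in> Xi" using enumin i .
      then obtain x0 c where c: "enum i = (x0, c)" "c \<in> X" unfolding Xi_def by auto
      have "u (enum i) (a l r x) = ch c (l, r) * u (enum i) x"
        using U[OF xi eE x] c unfolding aa_def by simp
      moreover have "w (enum i) (b l r y) = ch c (l, r) * w (enum i) y"
        using W[OF xi eE y] c unfolding bb_def by simp
      moreover have "ch c (l, r) * ch c (l, r) = 1" using chv c(2) eE unfolding E_def by blast
      ultimately have "u (enum i) (a l r x) * w (enum i) (b l r y) = u (enum i) x * w (enum i) y"
        by (metis (no_types, lifting) mult.assoc mult.commute mult.left_commute mult_1)
      then show "I (i, b l r y) (a l r x) = I (i, y) x \<and> P (a l r x) (i, b l r y) = P x (i, y)"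
        unfolding I_def P_def by simp
    qed
    show "\<forall>x\<in>A. \<forall>x'\<in>A. (\<Sum>c\<in>{..<k} \<times> B. P x c * I c x') = (if x = x' then 1 else 0)"
    proof (intro ballI)
      fix x x' assume x: "x \<in> A" and x': "x' \<in> A"
      have "(\<Sum>c\<in>{..<k} \<times> B. P x c * I c x') = (\<Sum>i<k. \<Sum>y\<in>B. P x (i, y) * I (i, y) x')"
        by (simp add: sum.cartesian_product)
      also have "\<dots> = (\<Sum>i<k. complex_of_real (u (enum i) x * u (enum i) x' / K))"
      proof (rule sum.cong[OF refl])
        fix i assume "i \<in> {..<k}"
        then have N': "nrm (enum i) > 0" using N enumin by auto
        have "(\<Sum>y\<in>B. P x (i, y) * I (i, y) x') =
            complex_of_real (\<Sum>y\<in>B. (u (enum i) x * u (enum i) x' / (nrm (enum i) * K)) * (w (enum i) y)^2)"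
          unfolding P_def I_def by (simp add: power2_eq_square mult_ac)
        also have "\<dots> = complex_of_real ((u (enum i) x * u (enum i) x' / (nrm (enum i) * K)) * nrm (enum i))"
          unfolding nrm_def by (simp add: sum_distrib_left)
        also have "\<dots> = complex_of_real (u (enum i) x * u (enum i) x' / K)"
          using N' by simp
        finally show "(\<Sum>y\<in>B. P x (i, y) * I (i, y) x') = complex_of_real (u (enum i) x * u (enum i) x' / K)" .
      qed
      also have "\<dots> = complex_of_real ((\<Sum>i<k. u (enum i) x * u (enum i) x') / K)"
        by (simp add: sum_divide_distrib)
      also have "(\<Sum>i<k. u (enum i) x * u (enum i) x') = (\<Sum>\<xi>\<in>Xi. u \<xi> x * u \<xi> x')"
        using sum.reindex_bij_betw[OF enumk, of "\<lambda>\<xi>. u \<xi> x * u \<xi> x'"] by simp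
      also have "\<dots> = (if x = x' then K else 0)" using F4 x x' .
      finally show "(\<Sum>c\<in>{..<k} \<times> B. P x c * I c x') = (if x = x' then 1 else 0)"
        using Kpos by simp
    qed
  qed
qed

definition par :: "nat \<Rightarrow> nat \<Rightarrow> bool" where
  "par a l = ((bit a 0 \<and> bit l 0) \<noteq> ((bit a 1 \<and> bit l 1) \<noteq> (bit a 2 \<and> bit l 2)))"

definition chr :: "nat \<Rightarrow> nat \<Rightarrow> real" where "chr a l = (if par a l then -1 else 1)"

lemma par_xor_r: "par a (xor l l') = (par a l \<noteq> par a l')"
  unfolding par_def by (simp add: bit_xor_iff) blast

lemma par_xor_l: "par (xor a b) l = (par a l \<noteq> par b l)"
  unfolding par_def by (simp add: bit_xor_iff) blast

lemma chr_mult: "chr a (xor l l') = chr a l * chr a l'"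
  unfolding chr_def by (simp add: par_xor_r)

lemma chr_sq: "chr a l * chr a l = 1"
  unfolding chr_def by simp

lemma sum8: "(\<Sum>a\<in>{..<(8::nat)}. F a) = F 0 + F 1 + F 2 + F 3 + F 4 + F 5 + F 6 + (F 7 :: real)"
proof -
  have "{..<(8::nat)} = {0,1,2,3,4,5,6,7}" by auto
  then show ?thesis by simp
qed

lemma all8: "(\<forall>x<(8::nat). P x) = (P 0 \<and> P 1 \<and> P 2 \<and> P 3 \<and> P 4 \<and> P 5 \<and> P 6 \<and> P 7)"
proof -
  have "{..<(8::nat)} = {0,1,2,3,4,5,6,7}" by auto
  then show ?thesis by (metis (no_types, lifting) insert_iff lessThan_iff empty_iff)
qed

lemma sum_chr: "d < 8 \<Longrightarrow> (\<Sum>a\<in>{..<8}. chr a d) = (if d = 0 then 8 else 0)"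
proof -
  have "\<forall>d<8. (\<Sum>a\<in>{..<8}. chr a d) = (if d = 0 then 8 else 0)"
    unfolding sum8 all8 by (simp add: chr_def par_def bit_Suc_0_iff)
  then show "d < 8 \<Longrightarrow> ?thesis" by blast
qed

lemma xor_cancel: "xor (x::nat) (xor x y) = y" "xor (xor y x) x = y"
  by (rule bit_eqI, auto simp: bit_xor_iff)+

lemma xor_eq0: "xor (l::nat) l' = 0 \<longleftrightarrow> l = l'"
proof
  assume h: "xor l l' = 0"
  show "l = l'"
  proof (rule bit_eqI)
    fix n
    have "\<not> bit (xor l l') n" using h by simp
    then show "bit l n = bit l' n" by (simp add: bit_xor_iff)
  qed
qed simp

lemma bf_16: "bf l (16 * g) = par g l"
  unfolding bf_def par_def bit16 by auto

lemma stab_lr: assumes "l < 8" "r < 8"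
  shows "gm (gm l g) r = g \<longleftrightarrow> r = l \<and> \<not> bf l g"
proof
  assume h: "gm (gm l g) r = g"
  have b: "((bit l n \<noteq> bit g n) \<noteq> (n = 3 \<and> bf l g)) \<noteq> bit r n = bit g n" for n
    using h[unfolded bit_eq_iff] bf_small[of r "gm l g"] assms(2) by (simp add: bit_gm)
  have l3: "\<not> bit l 3" "\<not> bit r 3" using lt8_bit assms by auto
  have nb: "\<not> bf l g" using b[of 3] l3 by auto
  moreover have "r = l" by (rule bit_eqI) (use b nb in auto)
  ultimately show "r = l \<and> \<not> bf l g" by simp
next
  assume "r = l \<and> \<not> bf l g"
  then show "gm (gm l g) r = g"
    using bf_small[of r "gm l g"] assms(2) by (intro bit_eqI) (auto simp: bit_gm)
qed

lemma HH_sub: "HH \<subseteq> carrier GG" unfolding HH_def by auto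

lemma subgroup_HH: "subgroup HH GG"
proof
  show "HH \<subseteq> carrier GG" by (rule HH_sub)
  show "\<And>x y. x \<in> HH \<Longrightarrow> y \<in> HH \<Longrightarrow> x \<otimes>\<^bsub>GG\<^esub> y \<in> HH"
    unfolding HH_def by (simp add: gm_small xor_lt8)
  show "\<one>\<^bsub>GG\<^esub> \<in> HH" unfolding HH_def by simp
  show "\<And>x. x \<in> HH \<Longrightarrow> inv\<^bsub>GG\<^esub> x \<in> HH"
    unfolding HH_def by (simp add: inv_GG gi_small)
qed

lemma gm_HH: "y \<in> HH \<Longrightarrow> gm x y = xor x y"
  unfolding HH_def by (simp add: gm_small)

lemma depth3: "is_summand_multiple (tensor_basis GG HH 2) (tensor_act GG)
                 (tensor_basis GG HH (Suc 0)) (tensor_act GG) HH HH"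
proof (rule pos[where em = "\<lambda>e e'. (gm (fst e) (fst e'), gm (snd e') (snd e))"
      and eone = "(0, 0)" and X = "{..<8} \<times> {..<8}" and ch = "\<lambda>c e. chr (fst c) (fst e) * chr (snd c) (snd e)"])
  have sg: "subgroup HH GG" by (rule subgroup_HH)
  have Hc: "\<And>x. x \<in> HH \<Longrightarrow> x \<in> carrier GG" using HH_sub by auto
  show "finite (tensor_basis GG HH 2)" by (rule GGg.tb_finite) simp
  show "tensor_basis GG HH 2 \<noteq> {}" using GGg.tb2[OF HH_sub] by (auto simp: lessThan_empty_iff)
  show "finite (tensor_basis GG HH (Suc 0))" by (rule GGg.tb_finite) simp
  show "finite (HH \<times> HH)" unfolding HH_def by simp
  show "\<forall>e\<in>HH \<times> HH. \<forall>x\<in>tensor_basis GG HH 2. tensor_act GG (fst e) (snd e) x \<in> tensor_basis GG HH 2"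
    using GGg.tb2_act_in[OF sg] Hc by auto
  show "\<forall>e\<in>HH \<times> HH. inj_on (tensor_act GG (fst e) (snd e)) (tensor_basis GG HH 2)"
    using GGg.tb2_bij[OF sg] Hc by (auto simp: bij_betw_def)
  show "\<forall>e\<in>HH \<times> HH. \<forall>y\<in>tensor_basis GG HH (Suc 0). tensor_act GG (fst e) (snd e) y \<in> tensor_basis GG HH (Suc 0)"
    using GGg.tb1_act_in Hc by auto
  show "\<forall>e\<in>HH \<times> HH. inj_on (tensor_act GG (fst e) (snd e)) (tensor_basis GG HH (Suc 0))"
    using GGg.tb1_bij Hc by (auto simp: bij_betw_def)
  show "\<forall>e\<in>HH \<times> HH. \<forall>e'\<in>HH \<times> HH. \<forall>x\<in>tensor_basis GG HH 2.
     tensor_act GG (fst (gm (fst e) (fst e'), gm (snd e') (snd e))) (snd (gm (fst e) (fst e'), gm (snd e') (snd e))) x =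
     tensor_act GG (fst e) (snd e) (tensor_act GG (fst e') (snd e') x)"
    using GGg.tb2_act_comp[OF sg] Hc by auto
  show "\<forall>e\<in>HH \<times> HH. \<forall>e'\<in>HH \<times> HH. \<forall>y\<in>tensor_basis GG HH (Suc 0).
     tensor_act GG (fst (gm (fst e) (fst e'), gm (snd e') (snd e))) (snd (gm (fst e) (fst e'), gm (snd e') (snd e))) y =
     tensor_act GG (fst e) (snd e) (tensor_act GG (fst e') (snd e') y)"
    using GGg.tb1_act_comp Hc by auto
  show "\<forall>e\<in>HH \<times> HH. bij_betw (\<lambda>e'. (gm (fst e) (fst e'), gm (snd e') (snd e))) (HH \<times> HH) (HH \<times> HH)"
  proof
    fix e assume e: "e \<in> HH \<times> HH"
    show "bij_betw (\<lambda>e'. (gm (fst e) (fst e'), gm (snd e') (snd e))) (HH \<times> HH) (HH \<times> HH)"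
      by (rule bij_betw_byWitness[where f'="\<lambda>e'. (gm (fst e) (fst e'), gm (snd e') (snd e))"])
        (use e in \<open>auto simp: gm_HH HH_def xor_lt8 xor_cancel\<close>)
  qed
  show "(0, 0) \<in> HH \<times> HH" unfolding HH_def by simp
  show "\<forall>y\<in>tensor_basis GG HH (Suc 0). tensor_act GG (fst (0, 0)) (snd (0, 0)) y = y"
    using GGg.tb1_act_one by simp
  show "finite ({..<8::nat} \<times> {..<8::nat})" by simp
  show "{..<8::nat} \<times> {..<8::nat} \<noteq> {}" by (auto simp: lessThan_empty_iff)
  show "\<forall>c\<in>{..<8} \<times> {..<8}. \<forall>e\<in>HH \<times> HH.
      chr (fst c) (fst e) * chr (snd c) (snd e) * (chr (fst c) (fst e) * chr (snd c) (snd e)) = 1"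
    by (simp add: chr_def)
  show "\<forall>c\<in>{..<8} \<times> {..<8}. \<forall>e\<in>HH \<times> HH. \<forall>e'\<in>HH \<times> HH.
     chr (fst c) (fst (gm (fst e) (fst e'), gm (snd e') (snd e))) * chr (snd c) (snd (gm (fst e) (fst e'), gm (snd e') (snd e))) =
     chr (fst c) (fst e) * chr (snd c) (snd e) * (chr (fst c) (fst e') * chr (snd c) (snd e'))"
    by (auto simp: gm_HH chr_mult mult_ac)
  show "\<forall>e\<in>HH \<times> HH. \<forall>e'\<in>HH \<times> HH.
     (\<Sum>c\<in>{..<8} \<times> {..<8}. chr (fst c) (fst e) * chr (snd c) (snd e) * (chr (fst c) (fst e') * chr (snd c) (snd e'))) =
     (if e = e' then real (card ({..<8::nat} \<times> {..<8::nat})) else 0)"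
  proof (intro ballI)
    fix e e' assume e: "e \<in> HH \<times> HH" and e': "e' \<in> HH \<times> HH"
    obtain l r l' r' where lr: "e = (l, r)" "e' = (l', r')" "l < 8" "r < 8" "l' < 8" "r' < 8"
      using e e' unfolding HH_def by auto
    have "(\<Sum>c\<in>{..<8} \<times> {..<8}. chr (fst c) (fst e) * chr (snd c) (snd e) * (chr (fst c) (fst e') * chr (snd c) (snd e')))
        = (\<Sum>a\<in>{..<8}. \<Sum>b\<in>{..<8}. chr a (xor l l') * chr b (xor r r'))"
      unfolding lr by (simp add: sum.cartesian_product case_prod_beta chr_mult mult_ac)
    also have "\<dots> = (\<Sum>a\<in>{..<8}. chr a (xor l l')) * (\<Sum>b\<in>{..<8}. chr b (xor r r'))"
      by (simp add: sum_product)
    also have "\<dots> = (if l = l' then 8 else 0) * (if r = r' then 8 else 0)"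
      using lr by (simp add: sum_chr xor_lt8 xor_eq0)
    also have "\<dots> = (if e = e' then real (card ({..<8::nat} \<times> {..<8::nat})) else 0)"
      using lr by (simp add: card_cartesian_product)
    finally show "(\<Sum>c\<in>{..<8} \<times> {..<8}. chr (fst c) (fst e) * chr (snd c) (snd e) * (chr (fst c) (fst e') * chr (snd c) (snd e'))) =
     (if e = e' then real (card ({..<8::nat} \<times> {..<8::nat})) else 0)" .
  qed
  show "\<forall>c\<in>{..<8} \<times> {..<8}. \<exists>y0\<in>tensor_basis GG HH (Suc 0). \<forall>e\<in>HH \<times> HH.
     tensor_act GG (fst e) (snd e) y0 = y0 \<longrightarrow> chr (fst c) (fst e) * chr (snd c) (snd e) = 1"
  proof
    fix c :: "nat \<times> nat" assume c: "c \<in> {..<8} \<times> {..<8}"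
    define g where "g = 16 * xor (fst c) (snd c)"
    have "xor (fst c) (snd c) < 8" using c by (auto simp: xor_lt8)
    then have g: "g < 128" unfolding g_def by simp
    show "\<exists>y0\<in>tensor_basis GG HH (Suc 0). \<forall>e\<in>HH \<times> HH.
       tensor_act GG (fst e) (snd e) y0 = y0 \<longrightarrow> chr (fst c) (fst e) * chr (snd c) (snd e) = 1"
    proof (intro bexI ballI impI)
      show "{[g]} \<in> tensor_basis GG HH (Suc 0)" using g by (simp add: GGg.tb1)
      fix e assume e: "e \<in> HH \<times> HH" and st: "tensor_act GG (fst e) (snd e) {[g]} = {[g]}"
      obtain l r where lr: "e = (l, r)" "l < 8" "r < 8" using e unfolding HH_def by auto
      have "gm (gm l g) r = g" using st lr by (simp add: GGg.act1)
      then have "r = l" "\<not> bf l g" using stab_lr lr by auto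
      then have "par (fst c) l = par (snd c) l" unfolding g_def bf_16 par_xor_l by simp
      then show "chr (fst c) (fst e) * chr (snd c) (snd e) = 1" using lr \<open>r = l\<close> by (simp add: chr_def)
    qed
  qed
qed

lemma chr_flip: "chr 1 (xor r 1) = - chr 1 r"
proof -
  have "chr 1 (1::nat) = -1" by (simp add: chr_def par_def bit_Suc_0_iff)
  then show ?thesis by (simp add: chr_mult)
qed

lemma xor_lt8': "x \<in> HH \<Longrightarrow> y \<in> HH \<Longrightarrow> xor x y \<in> HH"
  unfolding HH_def by (simp add: xor_lt8)

lemma xor_inv2: "xor (xor l (xor (xor l y) r)) r = (y::nat)"
  by (intro bit_eqI) (auto simp: bit_xor_iff)

lemma xor_perm: "xor (xor (xor l c) y) (xor r c) = xor (xor l y) (r::nat)"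
  by (intro bit_eqI) (auto simp: bit_xor_iff)

lemma gmgm_HH: "l \<in> HH \<Longrightarrow> y \<in> HH \<Longrightarrow> r \<in> HH \<Longrightarrow> gm (gm l y) r = xor (xor l y) r"
  by (simp add: gm_HH xor_lt8')

lemma not_depth1: "\<not> is_summand_multiple (carrier GG) (\<lambda>l r x. gm (gm l x) r) HH (\<lambda>l r x. gm (gm l x) r) HH HH"
proof
  assume S: "is_summand_multiple (carrier GG) (\<lambda>l r x. gm (gm l x) r) HH (\<lambda>l r x. gm (gm l x) r) HH HH"
  have h1: "finite (HH \<times> HH)" "HH \<times> HH \<subseteq> HH \<times> HH" "finite HH" unfolding HH_def by auto
  have h2: "(16::nat) \<in> carrier GG" by simp
  have h3: "\<forall>e\<in>HH \<times> HH. gm (gm (fst e) 16) (snd e) \<in> carrier GG"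
    unfolding HH_def by (auto intro!: gm_lt)
  have h4: "\<forall>e\<in>HH \<times> HH. bij_betw (\<lambda>y. gm (gm (fst e) y) (snd e)) HH HH"
  proof
    fix e :: "nat \<times> nat" assume e: "e \<in> HH \<times> HH"
    show "bij_betw (\<lambda>y. gm (gm (fst e) y) (snd e)) HH HH"
    proof (rule bij_betw_byWitness[where f'="\<lambda>y. gm (gm (fst e) y) (snd e)"])
      have l: "fst e \<in> HH" and r: "snd e \<in> HH" using e by auto
      show "\<forall>y\<in>HH. gm (gm (fst e) (gm (gm (fst e) y) (snd e))) (snd e) = y"
        using l r by (simp add: gmgm_HH xor_lt8' xor_inv2)
      then show "\<forall>y\<in>HH. gm (gm (fst e) (gm (gm (fst e) y) (snd e))) (snd e) = y" .
      show "(\<lambda>y. gm (gm (fst e) y) (snd e)) ` HH \<subseteq> HH"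
        using l r by (auto simp: gmgm_HH xor_lt8')
      then show "(\<lambda>y. gm (gm (fst e) y) (snd e)) ` HH \<subseteq> HH" .
    qed
  qed
  have h5: "\<forall>y'\<in>HH. \<exists>\<sigma>. \<forall>e\<in>HH \<times> HH. \<sigma> e \<in> HH \<times> HH \<and> \<sigma> (\<sigma> e) = e \<and>
      complex_of_real (chr 1 (snd (\<sigma> e))) = - complex_of_real (chr 1 (snd e)) \<and>
      gm (gm (fst (\<sigma> e)) y') (snd (\<sigma> e)) = gm (gm (fst e) y') (snd e)"
  proof
    fix y' assume y': "y' \<in> HH"
    have one: "(1::nat) \<in> HH" unfolding HH_def by simp
    show "\<exists>\<sigma>. \<forall>e\<in>HH \<times> HH. \<sigma> e \<in> HH \<times> HH \<and> \<sigma> (\<sigma> e) = e \<and>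
      complex_of_real (chr 1 (snd (\<sigma> e))) = - complex_of_real (chr 1 (snd e)) \<and>
      gm (gm (fst (\<sigma> e)) y') (snd (\<sigma> e)) = gm (gm (fst e) y') (snd e)"
    proof (rule exI[of _ "\<lambda>e. (xor (fst e) 1, xor (snd e) 1)"], intro ballI conjI)
      fix e :: "nat \<times> nat" assume e: "e \<in> HH \<times> HH"
      have l: "fst e \<in> HH" and r: "snd e \<in> HH" using e by auto
      show "(xor (fst e) 1, xor (snd e) 1) \<in> HH \<times> HH" using l r one by (simp add: xor_lt8')
      show "(xor (fst (xor (fst e) 1, xor (snd e) 1)) 1, xor (snd (xor (fst e) 1, xor (snd e) 1)) 1) = e"
        by (simp add: xor_cancel)
      show "complex_of_real (chr 1 (snd (xor (fst e) 1, xor (snd e) 1))) = - complex_of_real (chr 1 (snd e))"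
        unfolding snd_conv chr_flip[of "snd e"] by simp
      show "gm (gm (fst (xor (fst e) 1, xor (snd e) 1)) y') (snd (xor (fst e) 1, xor (snd e) 1)) = gm (gm (fst e) y') (snd e)"
        using l r y' one by (simp add: gmgm_HH xor_lt8' xor_perm)
    qed
  qed
  have h6: "(\<Sum>e\<in>HH \<times> HH. if gm (gm (fst e) 16) (snd e) = 16 then complex_of_real (chr 1 (snd e)) else 0) \<noteq> 0"
  proof -
    have "(\<Sum>e\<in>HH \<times> HH. if gm (gm (fst e) 16) (snd e) = 16 then complex_of_real (chr 1 (snd e)) else 0)
        = (\<Sum>e\<in>HH \<times> HH. complex_of_real (if snd e = fst e \<and> \<not> bf (fst e) 16 then chr 1 (snd e) else 0))"
      by (intro sum.cong refl) (auto simp: stab_lr HH_def)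
    also have "\<dots> = complex_of_real (\<Sum>e\<in>HH \<times> HH. if snd e = fst e \<and> \<not> bf (fst e) 16 then chr 1 (snd e) else 0)"
      by simp
    also have "(\<Sum>e\<in>HH \<times> HH. if snd e = fst e \<and> \<not> bf (fst e) 16 then chr 1 (snd e) else 0)
        = (\<Sum>l\<in>{..<8}. \<Sum>r\<in>{..<8}. if r = l \<and> \<not> bf l 16 then chr 1 r else 0)"
      unfolding HH_def by (simp add: sum.cartesian_product case_prod_beta)
    also have "\<dots> = (\<Sum>l\<in>{..<8}. if \<not> bf l 16 then chr 1 l else 0)"
      by (intro sum.cong refl) (simp add: sum.delta if_distrib cong: if_cong)
    also have "\<dots> = 4" unfolding sum8 by (simp add: bf_def chr_def par_def bit_Suc_0_iff)
    finally show ?thesis by simp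
  qed
  show False using obs[OF S h1 h2 h3 h4 h5 h6] .
qed

lemma gm_gi_cancel: "gm (gi y) (gm y z) = z"
  by (simp add: gm_assoc[symmetric] gm_gi gm_0l)

lemma gm_c_xor: assumes "c < 16" "r < 16" shows "gm c (xor r c) = r"
proof -
  have "xor r c < 2^4" using assms lt_pow_bits[of _ 4] by (simp add: bit_xor_iff)
  then have "gm c (xor r c) = xor c (xor r c)" by (simp add: gm_small)
  also have "\<dots> = r" by (intro bit_eqI) (auto simp: bit_xor_iff)
  finally show ?thesis .
qed

definition NN :: "nat set" where "NN = {0, 1, 8, 9}"

lemma stab_check: "\<forall>r<8. \<forall>l\<in>{0,1::nat}. gm 16 r = gm l 16 \<longrightarrow> l = 0 \<and> r = 0"
  unfolding all8 by (simp add: gm_def bf_def bit_Suc_0_iff)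

lemma NN_check: "l \<in> NN \<Longrightarrow> c \<in> {1, 9} \<Longrightarrow> xor l c \<in> NN"
  unfolding NN_def by auto

lemma not_depth2: "\<not> is_summand_multiple (tensor_basis GG HH 2) (tensor_act GG)
                 (tensor_basis GG HH (Suc 0)) (tensor_act GG) (carrier GG) HH"
proof
  assume S: "is_summand_multiple (tensor_basis GG HH 2) (tensor_act GG)
                 (tensor_basis GG HH (Suc 0)) (tensor_act GG) (carrier GG) HH"
  have sg: "subgroup HH GG" by (rule subgroup_HH)
  have NNc: "NN \<subseteq> carrier GG" unfolding NN_def by auto
  define x0 where "x0 = orb2 GG HH 0 16"
  have h1: "finite (NN \<times> HH)" "NN \<times> HH \<subseteq> carrier GG \<times> HH" "finite (tensor_basis GG HH (Suc 0))"
    using NNc GGg.tb_finite[of HH "Suc 0"] unfolding NN_def HH_def by auto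
  have h2: "x0 \<in> tensor_basis GG HH 2" unfolding x0_def GGg.tb2[OF HH_sub]
    by (rule image_eqI[where x="(0, 16)"]) auto
  have h3: "\<forall>e\<in>NN \<times> HH. tensor_act GG (fst e) (snd e) x0 \<in> tensor_basis GG HH 2"
    using GGg.tb2_act_in[OF sg _ _ h2] NNc HH_sub by auto
  have h4: "\<forall>e\<in>NN \<times> HH. bij_betw (tensor_act GG (fst e) (snd e)) (tensor_basis GG HH (Suc 0)) (tensor_basis GG HH (Suc 0))"
  proof
    fix e assume "e \<in> NN \<times> HH"
    then have "fst e \<in> carrier GG" "snd e \<in> carrier GG" using NNc HH_sub by auto
    then show "bij_betw (tensor_act GG (fst e) (snd e)) (tensor_basis GG HH (Suc 0)) (tensor_basis GG HH (Suc 0))"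
      by (rule GGg.tb1_bij)
  qed
  have h5: "\<forall>y'\<in>tensor_basis GG HH (Suc 0). \<exists>\<sigma>. \<forall>e\<in>NN \<times> HH. \<sigma> e \<in> NN \<times> HH \<and> \<sigma> (\<sigma> e) = e \<and>
      complex_of_real (chr 1 (snd (\<sigma> e))) = - complex_of_real (chr 1 (snd e)) \<and>
      tensor_act GG (fst (\<sigma> e)) (snd (\<sigma> e)) y' = tensor_act GG (fst e) (snd e) y'"
  proof
    fix y' assume "y' \<in> tensor_basis GG HH (Suc 0)"
    then obtain y where y: "y' = {[y]}" "y < 128" by (auto simp: GGg.tb1)
    define c where "c = cj 1 y"
    have c19: "c \<in> {1, 9}" unfolding c_def cj_def by auto
    have c16: "c < 16" using c19 by auto
    have cf: "c = gm (gm y 1) (gi y)" unfolding c_def using conj_formula2[OF y(2)] by simp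
    have one: "(1::nat) \<in> HH" unfolding HH_def by simp
    show "\<exists>\<sigma>. \<forall>e\<in>NN \<times> HH. \<sigma> e \<in> NN \<times> HH \<and> \<sigma> (\<sigma> e) = e \<and>
      complex_of_real (chr 1 (snd (\<sigma> e))) = - complex_of_real (chr 1 (snd e)) \<and>
      tensor_act GG (fst (\<sigma> e)) (snd (\<sigma> e)) y' = tensor_act GG (fst e) (snd e) y'"
    proof (rule exI[of _ "\<lambda>e. (gm (fst e) c, xor (snd e) 1)"], intro ballI conjI)
      fix e :: "nat \<times> nat" assume e: "e \<in> NN \<times> HH"
      have l: "fst e \<in> NN" and r: "snd e \<in> HH" using e by auto
      show "(gm (fst e) c, xor (snd e) 1) \<in> NN \<times> HH"
        using l r one c19 c16 by (simp add: gm_small xor_lt8' NN_check)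
      show "(gm (fst (gm (fst e) c, xor (snd e) 1)) c, xor (snd (gm (fst e) c, xor (snd e) 1)) 1) = e"
        using c16 by (simp add: gm_small xor_cancel)
      show "complex_of_real (chr 1 (snd (gm (fst e) c, xor (snd e) 1))) = - complex_of_real (chr 1 (snd e))"
        unfolding snd_conv chr_flip[of "snd e"] by simp
      have "gm (gm (gm (fst e) c) y) (xor (snd e) 1) = gm (gm (fst e) y) (snd e)"
        using r c16 unfolding cf by (simp add: gm_assoc gm_gi_cancel gm_c_xor HH_def)
      then show "tensor_act GG (fst (gm (fst e) c, xor (snd e) 1)) (snd (gm (fst e) c, xor (snd e) 1)) y' =
          tensor_act GG (fst e) (snd e) y'"
        by (simp add: y(1) GGg.act1)
    qed
  qed
  have stab: "tensor_act GG (fst e) (snd e) x0 = x0 \<longleftrightarrow> e = (0, 0)" if e: "e \<in> NN \<times> HH" for e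
  proof
    obtain l r where lr: "e = (l, r)" "l \<in> NN" "r \<in> HH" using e by auto
    have lc: "l \<in> carrier GG" and rc: "r \<in> carrier GG" using lr NNc HH_sub by auto
    assume "tensor_act GG (fst e) (snd e) x0 = x0"
    then have "orb2 GG HH (l \<otimes>\<^bsub>GG\<^esub> 0) (16 \<otimes>\<^bsub>GG\<^esub> r) = orb2 GG HH 0 16"
      unfolding x0_def lr fst_conv snd_conv using GGg.act2[OF HH_sub lc rc, of 0 16] by simp
    then have eq: "orb2 GG HH 0 16 = orb2 GG HH l (gm 16 r)" by (simp add: gm_0r)
    have c16: "gm 16 r \<in> carrier GG" using rc by (simp add: gm_lt)
    have z: "(0::nat) \<in> carrier GG" "(16::nat) \<in> carrier GG" by simp_all
    obtain h where h: "h \<in> HH" "l = gm 0 h" "gm 16 r = gm (inv\<^bsub>GG\<^esub> h) 16"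
      using GGg.orb2_eq[OF sg z(1) z(2) lc c16 eq] by auto
    have hi: "inv\<^bsub>GG\<^esub> h = h" using h(1) HH_sub unfolding HH_def by (simp add: inv_GG gi_small subset_iff)
    have hl: "l = h" "gm 16 r = gm l 16" using h(2) h(3) hi by (simp_all add: gm_0l)
    have l01: "l \<in> {0, 1}" using lr(2) h(1) hl(1) unfolding NN_def HH_def by auto
    have r8: "r < 8" using lr(3) unfolding HH_def by simp
    have "l = 0 \<and> r = 0" using stab_check[rule_format, OF r8 l01 hl(2)] .
    then show "e = (0, 0)" using lr by simp
  next
    assume "e = (0, 0)"
    then show "tensor_act GG (fst e) (snd e) x0 = x0"
      using GGg.tb2_act_one[OF sg h2] by simp
  qed
  have h6: "(\<Sum>e\<in>NN \<times> HH. if tensor_act GG (fst e) (snd e) x0 = x0 then complex_of_real (chr 1 (snd e)) else 0) \<noteq> 0"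
  proof -
    have "(\<Sum>e\<in>NN \<times> HH. if tensor_act GG (fst e) (snd e) x0 = x0 then complex_of_real (chr 1 (snd e)) else 0)
       = (\<Sum>e\<in>NN \<times> HH. if e = (0, 0) then complex_of_real (chr 1 (snd e)) else 0)"
      using stab by (intro sum.cong refl) auto
    also have "\<dots> = 1" using h1(1) unfolding NN_def HH_def by (simp add: sum.delta' chr_def par_def)
    finally show ?thesis by simp
  qed
  show False using obs[OF S h1 h2 h3 h4 h5 h6] .
qed

lemma conj_GG: assumes "g \<in> carrier GG"
  shows "conj_subgroup GG HH g = (\<lambda>h. cj h g) ` HH"
  unfolding conj_subgroup_def
proof (rule image_cong[OF refl])
  fix h assume "h \<in> HH"
  then show "inv\<^bsub>GG\<^esub> g \<otimes>\<^bsub>GG\<^esub> h \<otimes>\<^bsub>GG\<^esub> g = cj h g"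
    using assms conj_formula[of g h] by (simp add: inv_GG HH_def)
qed

lemma bit_cj: "bit (cj h g) n \<longleftrightarrow> (bit h n \<noteq> (n = 3 \<and> bf h g))"
  unfolding cj_def by (simp add: bit_xor_iff bit_ite8) blast

lemma cj_0: "cj 0 g = 0" by (simp add: cj_def bf_def)

lemma cj_nobf: "\<not> bf h g \<Longrightarrow> cj h g = h" by (simp add: cj_def)

lemma cj_in_HH: assumes "h < 8" "cj h g \<in> HH" shows "\<not> bf h g"
proof
  assume b: "bf h g"
  have "bit (cj h g) 3" using b lt8_bit[OF assms(1), of 3] by (simp add: bit_cj)
  moreover have "\<not> bit (cj h g) 3" using assms(2) lt8_bit[of "cj h g" 3] unfolding HH_def by simp
  ultimately show False by simp
qed

lemma cj_ne0: assumes "h < 8" "h \<noteq> 0" shows "cj h g \<noteq> 0"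
proof
  assume z: "cj h g = 0"
  have "h = 0"
  proof (rule bit_eqI)
    fix n
    have "\<not> bit (cj h g) n" using z by simp
    then show "bit h n = bit 0 n" using lt8_bit[OF assms(1), of n] by (auto simp: bit_cj)
  qed
  then show False using assms(2) by simp
qed

lemma conj_mem_HH: assumes "x \<in> carrier GG" "t \<in> conj_subgroup GG HH x" "t \<in> HH"
  shows "\<not> bf t x"
proof -
  obtain h where h: "h \<in> HH" "t = cj h x" using assms(1,2) by (auto simp: conj_GG)
  have "\<not> bf h x" using cj_in_HH[of h x] h assms(3) unfolding HH_def by simp
  then show ?thesis using h by (simp add: cj_nobf)
qed

lemma conj_0: "conj_subgroup GG HH 0 = HH"
proof -
  have "conj_subgroup GG HH 0 = (\<lambda>h. cj h 0) ` HH" by (simp add: conj_GG)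
  also have "\<dots> = HH" by (simp add: cj_def bf_def)
  finally show ?thesis .
qed

lemma zero_in_conj: assumes "x \<in> carrier GG" shows "(0::nat) \<in> conj_subgroup GG HH x"
proof -
  have "cj 0 x \<in> (\<lambda>h. cj h x) ` HH" unfolding HH_def by simp
  then show ?thesis using conj_GG[OF assms] cj_0[of x] by simp
qed

lemma check3: "\<forall>t<8. \<not> bf t 16 \<and> \<not> bf t 32 \<and> \<not> bf t 64 \<longrightarrow> t = (0::nat)"
  unfolding all8 by (simp add: bf_def bit_Suc_0_iff)

lemma inter4: "(\<Inter>x\<in>{0, 16, 32, 64}. conj_subgroup GG HH x) = {0}"
proof
  show "{0} \<subseteq> (\<Inter>x\<in>{0, 16, 32, 64}. conj_subgroup GG HH x)"
    using zero_in_conj by auto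
  show "(\<Inter>x\<in>{0, 16, 32, 64}. conj_subgroup GG HH x) \<subseteq> {0}"
  proof
    fix t assume t: "t \<in> (\<Inter>x\<in>{0, 16, 32, 64}. conj_subgroup GG HH x)"
    then have tH: "t \<in> HH" using conj_0 by auto
    have "\<not> bf t 16" "\<not> bf t 32" "\<not> bf t 64"
      using t tH conj_mem_HH[of 16 t] conj_mem_HH[of 32 t] conj_mem_HH[of 64 t] by auto
    then have "t = 0" using check3 tH unfolding HH_def by auto
    then show "t \<in> {0}" by simp
  qed
qed

lemma core_free_GG: "core_free GG HH"
  unfolding core_free_def
proof
  show "(\<Inter>g\<in>carrier GG. conj_subgroup GG HH g) \<subseteq> {\<one>\<^bsub>GG\<^esub>}"
  proof -
    have "(\<Inter>g\<in>carrier GG. conj_subgroup GG HH g) \<subseteq> (\<Inter>x\<in>{0, 16, 32, 64}. conj_subgroup GG HH x)"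
      by (rule INT_anti_mono) auto
    then show ?thesis unfolding inter4 by simp
  qed
  show "{\<one>\<^bsub>GG\<^esub>} \<subseteq> (\<Inter>g\<in>carrier GG. conj_subgroup GG HH g)"
    using zero_in_conj by auto
qed

lemma card_bool2: "card (UNIV :: (bool \<times> bool) set) = 4"
  by (simp add: card_UNIV_bool UNIV_Times_UNIV[symmetric] card_cartesian_product del: UNIV_Times_UNIV)

lemma triple: "\<exists>h. 0 < h \<and> h < (8::nat) \<and> bf h y = bf h x \<and> bf h z = bf h x"
proof -
  define F where "F h = (bf h x \<noteq> bf h y, bf h x \<noteq> bf h z)" for h
  have "\<not> inj_on F {..<8}"
  proof
    assume "inj_on F {..<8}"
    then have "card {..<(8::nat)} \<le> card (UNIV :: (bool \<times> bool) set)"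
      by (rule card_inj_on_le) auto
    then show False using card_bool2 by simp
  qed
  then obtain h1 h2 where h: "h1 < 8" "h2 < 8" "h1 \<noteq> h2" "F h1 = F h2"
    unfolding inj_on_def by auto
  define h where "h = xor h1 h2"
  have "h \<noteq> 0" using h(3) xor_eq0 unfolding h_def by auto
  moreover have "h < 8" using h xor_lt8 unfolding h_def by auto
  moreover have "bf h y = bf h x \<and> bf h z = bf h x"
    using h(4) unfolding h_def F_def bf_xor_left by auto
  ultimately show ?thesis by auto
qed

lemma list3: "xs \<noteq> [] \<Longrightarrow> length xs \<le> 3 \<Longrightarrow> \<exists>a b c. set xs = {a, b, c}"
proof (cases xs)
  case (Cons a t)
  assume l: "length xs \<le> 3"
  show ?thesis
  proof (cases t)
    case Nil then show ?thesis using Cons by auto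
  next
    case (Cons b t2)
    show ?thesis
    proof (cases t2)
      case Nil then show ?thesis using Cons \<open>xs = a # t\<close> by auto
    next
      case (Cons c t3)
      then have "t3 = []" using l \<open>xs = a # t\<close> \<open>t = b # t2\<close> by auto
      then show ?thesis using Cons \<open>xs = a # t\<close> \<open>t = b # t2\<close> by auto
    qed
  qed
qed simp

lemma three_conj_nontriv:
  assumes "a \<in> carrier GG" "b \<in> carrier GG" "c \<in> carrier GG"
  shows "\<exists>t. t \<noteq> 0 \<and> t \<in> conj_subgroup GG HH a \<and> t \<in> conj_subgroup GG HH b \<and> t \<in> conj_subgroup GG HH c"
proof -
  obtain h where h: "0 < h" "h < 8" "bf h b = bf h a" "bf h c = bf h a" using triple by blast
  have hH: "h \<in> HH" using h unfolding HH_def by simp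
  have "cj h a \<in> conj_subgroup GG HH a" using hH assms(1) by (simp add: conj_GG)
  moreover have "cj h a \<in> conj_subgroup GG HH b"
  proof -
    have "cj h b \<in> conj_subgroup GG HH b" using hH assms(2) by (simp add: conj_GG)
    then show ?thesis using h(3) by (simp add: cj_def)
  qed
  moreover have "cj h a \<in> conj_subgroup GG HH c"
  proof -
    have "cj h c \<in> conj_subgroup GG HH c" using hH assms(3) by (simp add: conj_GG)
    then show ?thesis using h(4) by (simp add: cj_def)
  qed
  moreover have "cj h a \<noteq> 0" using cj_ne0 h by simp
  ultimately show ?thesis by blast
qed

lemma base_size_GG: "base_size GG HH = 4"
  unfolding base_size_def
proof (rule Least_equality)
  show "\<exists>xs. length xs = 4 \<and> set xs \<subseteq> carrier GG \<and> (\<Inter>x\<in>set xs. conj_subgroup GG HH x) = {\<one>\<^bsub>GG\<^esub>}"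
    by (rule exI[of _ "[0, 16, 32, 64]"]) (use inter4 in simp)
  fix y assume "\<exists>xs. length xs = y \<and> set xs \<subseteq> carrier GG \<and> (\<Inter>x\<in>set xs. conj_subgroup GG HH x) = {\<one>\<^bsub>GG\<^esub>}"
  then obtain xs where xs: "length xs = y" "set xs \<subseteq> carrier GG" "(\<Inter>x\<in>set xs. conj_subgroup GG HH x) = {0}"
    by auto
  show "4 \<le> y"
  proof (rule ccontr)
    assume "\<not> 4 \<le> y"
    then have l3: "length xs \<le> 3" using xs(1) by simp
    show False
    proof (cases "xs = []")
      case True
      then have "(\<Inter>x\<in>set xs. conj_subgroup GG HH x) = UNIV" by simp
      then show False using xs(3) by (metis UNIV_I singletonD zero_neq_one)
    next
      case False
      obtain a b c where abc: "set xs = {a, b, c}" using list3[OF False l3] by blast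
      have carr: "a \<in> carrier GG" "b \<in> carrier GG" "c \<in> carrier GG" using xs(2) abc by auto
      obtain t where t: "t \<noteq> 0" "t \<in> conj_subgroup GG HH a" "t \<in> conj_subgroup GG HH b" "t \<in> conj_subgroup GG HH c"
        using three_conj_nontriv[OF carr] by blast
      have "t \<in> (\<Inter>x\<in>set xs. conj_subgroup GG HH x)" using t abc by auto
      then show False using xs(3) t(1) by simp
    qed
  qed
qed

lemma no_pair: "\<not> (\<exists>x\<in>carrier GG. \<exists>y\<in>carrier GG.
          HH \<inter> conj_subgroup GG HH x \<inter> conj_subgroup GG HH y = {\<one>\<^bsub>GG\<^esub>})"
proof
  assume "\<exists>x\<in>carrier GG. \<exists>y\<in>carrier GG. HH \<inter> conj_subgroup GG HH x \<inter> conj_subgroup GG HH y = {\<one>\<^bsub>GG\<^esub>}"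
  then obtain x y where xy: "x \<in> carrier GG" "y \<in> carrier GG"
    "HH \<inter> conj_subgroup GG HH x \<inter> conj_subgroup GG HH y = {0}" by auto
  have z: "(0::nat) \<in> carrier GG" by simp
  obtain t where t: "t \<noteq> 0" "t \<in> conj_subgroup GG HH 0" "t \<in> conj_subgroup GG HH x" "t \<in> conj_subgroup GG HH y"
    using three_conj_nontriv[OF z xy(1) xy(2)] by blast
  then have "t \<in> HH \<inter> conj_subgroup GG HH x \<inter> conj_subgroup GG HH y" using conj_0 by auto
  then show False using xy(3) t(1) by simp
qed

lemma has_depth3: "has_depth GG HH 3"
proof -
  have "is_summand_multiple (tensor_basis GG HH (1 + 1)) (tensor_act GG)
                 (tensor_basis GG HH 1) (tensor_act GG) HH HH"
    using depth3 by (simp add: numeral_2_eq_2)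
  then show ?thesis unfolding has_depth_def by (intro disjI2 exI[of _ 1]) simp
qed

lemma not_has_depth1: "\<not> has_depth GG HH 1"
  unfolding has_depth_def using not_depth1 by auto

lemma not_has_depth2: "\<not> has_depth GG HH 2"
proof
  assume "has_depth GG HH 2"
  then have "is_summand_multiple (tensor_basis GG HH (1 + 1)) (tensor_act GG)
                 (tensor_basis GG HH 1) (tensor_act GG) (carrier GG) HH"
    unfolding has_depth_def by auto
  then show False using not_depth2 by (simp add: numeral_2_eq_2)
qed

lemma depth_GG: "depth GG HH = 3"
  unfolding depth_def
proof (rule Least_equality)
  show "1 \<le> (3::nat) \<and> has_depth GG HH 3" using has_depth3 by simp
  fix y :: nat assume y: "1 \<le> y \<and> has_depth GG HH y"
  show "3 \<le> y"
  proof (rule ccontr)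
    assume "\<not> 3 \<le> y"
    then have "y = 1 \<or> y = 2" using y by auto
    then show False using y not_has_depth1 not_has_depth2 by auto
  qed
qed

theorem mainTheorem16:
  shows "\<exists>(G :: nat monoid) H.
     group G \<and> finite (carrier G) \<and> card (carrier G) = 2 ^ 7 \<and>
     subgroup H G \<and> elementary_abelian_2 G H \<and> card H = 8 \<and> core_free G H \<and>
     depth G H = 3 \<and> base_size G H = 4 \<and>
     \<not> (\<exists>x\<in>carrier G. \<exists>y\<in>carrier G.
          H \<inter> conj_subgroup G H x \<inter> conj_subgroup G H y = {\<one>\<^bsub>G\<^esub>})"
proof (intro exI conjI)
  show "group GG" by (rule group_GG)
  show "finite (carrier GG)" by simp
  show "card (carrier GG) = 2 ^ 7" by simp
  show "subgroup HH GG" by (rule subgroup_HH)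
  show "elementary_abelian_2 GG HH"
    unfolding elementary_abelian_2_def
    by (auto simp: gm_HH xor.commute xor_eq0)
  show "card HH = 8" unfolding HH_def by simp
  show "core_free GG HH" by (rule core_free_GG)
  show "depth GG HH = 3" by (rule depth_GG)
  show "base_size GG HH = 4" by (rule base_size_GG)
  show "\<not> (\<exists>x\<in>carrier GG. \<exists>y\<in>carrier GG.
          HH \<inter> conj_subgroup GG HH x \<inter> conj_subgroup GG HH y = {\<one>\<^bsub>GG\<^esub>})" by (rule no_pair)
qed

end
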